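(* Let $\alpha=\exp\left(\frac{2\pi i}{5}\right)$, let $c,x\in\mathbb{C}$, and let $(a_1,A_1),\dots,(a_p,A_p)$ and $(b_1,B_1),\dots,(b_q,B_q)$ be parameter pairs ($a_j,b_j\in\mathbb{C}$, $A_j,B_j$ nonzero reals) such that all Pochhammer symbols involved are well defined and all series involved converge. Then $$\sum_{k=0}^{4}{}_p\Psi^{*}_q\left[\begin{array}{c}(a_1,A_1),\dots,(a_p,A_p);\\(b_1,B_1),\dots,(b_q,B_q);\end{array} c(x\alpha^k)^2\right] =5\,{}_p\Psi^{*}_{q+4}\left[\begin{array}{c}(a_1,5A_1),\dots,(a_p,5A_p);\\ \left(\tfrac15,1\right),\left(\tfrac25,1\right),\left(\tfrac35,1\right),\left(\tfrac45,1\right),(b_1,5B_1),\dots,(b_q,5B_q);\end{array}\left(\frac{cx^2}{5}\right)^5\right].$$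
   Context: For $\lambda,\nu\in\mathbb{C}$ the Pochhammer symbol is $(\lambda)_\nu=\Gamma(\lambda+\nu)/\Gamma(\lambda)$ (with $(\lambda)_0=1$). The normalized Fox–Wright function is $${}_p\Psi^{*}_q\left[\begin{array}{c}(\alpha_1,A_1),\dots,(\alpha_p,A_p);\\(\beta_1,B_1),\dots,(\beta_q,B_q);\end{array}z\right]=\sum_{n=0}^{\infty}\frac{(\alpha_1)_{nA_1}\cdots(\alpha_p)_{nA_p}}{(\beta_1)_{nB_1}\cdots(\beta_q)_{nB_q}}\frac{z^n}{n!},$$ where $\alpha_i,\beta_j\in\mathbb{C}$ and $A_i,B_j$ are nonzero reals. Values of parameters and variables for which the expressions do not make sense are excluded. *)

theory Defs
  imports "HOL-Analysis.Analysis"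
begin

definition poch_gen :: "complex \<Rightarrow> real \<Rightarrow> complex" where
  "poch_gen l v = (if v = 0 then 1 else Gamma (l + of_real v) / Gamma l)"

definition fw_coeff :: "(complex \<times> real) list \<Rightarrow> (complex \<times> real) list \<Rightarrow> nat \<Rightarrow> complex" where
  "fw_coeff as bs n =
     (\<Prod>(a, A) \<leftarrow> as. poch_gen a (real n * A)) / (\<Prod>(b, B) \<leftarrow> bs. poch_gen b (real n * B))"

definition fw_term :: "(complex \<times> real) list \<Rightarrow> (complex \<times> real) list \<Rightarrow> complex \<Rightarrow> nat \<Rightarrow> complex" where
  "fw_term as bs z n = fw_coeff as bs n * z ^ n / fact n"

definition fox_wright_star :: "(complex \<times> real) list \<Rightarrow> (complex \<times> real) list \<Rightarrow> complex \<Rightarrow> complex" where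
  "fox_wright_star as bs z = (\<Sum>n. fw_term as bs z n)"

definition poch_ok :: "complex \<times> real \<Rightarrow> bool" where
  "poch_ok p = (\<forall>n::nat. fst p \<notin> \<int>\<^sub>\<le>\<^sub>0 \<and> fst p + of_real (real n * snd p) \<notin> \<int>\<^sub>\<le>\<^sub>0)"

end

theory Submission imports Defs begin

lemma poch_gen_nat: "z \<notin> \<int>\<^sub>\<le>\<^sub>0 \<Longrightarrow> poch_gen z (real m) = pochhammer z m"
  by (simp add: poch_gen_def pochhammer_Gamma Gamma_eq_zero_iff)

lemma fifth_ok: "(of_nat j / 5 :: complex) \<notin> \<int>\<^sub>\<le>\<^sub>0" if "j > 0"
proof
  assume "(of_nat j / 5 :: complex) \<in> \<int>\<^sub>\<le>\<^sub>0"
  then obtain n where "(of_nat j / 5 :: complex) = - of_nat n" by (auto elim!: nonpos_Ints_cases')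
  then have "(of_nat j :: complex) = - 5 * of_nat n" by (simp add: field_simps)
  then have "Re (of_nat j) = Re (- 5 * of_nat n)" by simp
  then have "real j = - 5 * real n" by simp
  with that show False by linarith
qed

lemma fact5: "(fact (5*m) :: complex) = 5^(5*m) * fact m * (pochhammer (1/5) m * pochhammer (2/5) m
   * pochhammer (3/5) m * pochhammer (4/5) m)"
proof (induction m)
  case 0 then show ?case by simp
next
  case (Suc m)
  have e: "5 * Suc m = Suc (Suc (Suc (Suc (Suc (5*m)))))" by simp
  show ?case unfolding e
    apply (simp only: fact_Suc pochhammer_Suc Suc.IH)
    apply (simp add: field_simps power_add)
    done
qed

lemma fw_coeff_5: "fw_coeff (map (\<lambda>(a, A). (a, 5 * A)) as)
                  ([(1/5, 1), (2/5, 1), (3/5, 1), (4/5, 1)] @ map (\<lambda>(b, B). (b, 5 * B)) bs) m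
  = fw_coeff as bs (5*m) / (pochhammer (1/5) m * pochhammer (2/5) m
   * pochhammer (3/5) m * pochhammer (4/5) m)"
proof -
  have q: "poch_gen (of_nat j / 5) (real m) = pochhammer (of_nat j / 5) m" if "j > 0" for j
    using poch_gen_nat fifth_ok that by blast
  have q1: "poch_gen (1 / 5) (real m) = pochhammer (1 / 5) m" using q[of 1] by simp
  have q2: "poch_gen (2 / 5) (real m) = pochhammer (2 / 5) m" using q[of 2] by simp
  have q3: "poch_gen (3 / 5) (real m) = pochhammer (3 / 5) m" using q[of 3] by simp
  have q4: "poch_gen (4 / 5) (real m) = pochhammer (4 / 5) m" using q[of 4] by simp
  have a: "(\<Prod>(a, A) \<leftarrow> map (\<lambda>(a, A). (a, 5 * A)) as. poch_gen a (real m * A))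
     = (\<Prod>(a, A) \<leftarrow> as. poch_gen a (real (5*m) * A))"
    by (induction as) (auto simp: mult.assoc mult.left_commute)
  have b: "(\<Prod>(a, A) \<leftarrow> map (\<lambda>(a, A). (a, 5 * A)) bs. poch_gen a (real m * A))
     = (\<Prod>(a, A) \<leftarrow> bs. poch_gen a (real (5*m) * A))"
    by (induction bs) (auto simp: mult.assoc mult.left_commute)
  show ?thesis unfolding fw_coeff_def
    using a b q1 q2 q3 q4 by (simp add: field_simps)
qed

lemma alpha_pow_eq_1: "exp (2 * of_real pi * \<i> / 5) ^ j = 1 \<longleftrightarrow> 5 dvd j"
proof -
  have e: "exp (2 * of_real pi * \<i> / 5) ^ j = exp (of_nat j * (2 * of_real pi * \<i> / 5))"
    by (simp add: exp_of_nat_mult[symmetric])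
  have "exp (of_nat j * (2 * of_real pi * \<i> / 5)) = 1 \<longleftrightarrow> (\<exists>n::int. 2 * pi * real j / 5 = of_int (2*n) * pi)"
    by (subst exp_eq_1) simp
  also have "\<dots> \<longleftrightarrow> (\<exists>n::int. int j = 5 * n)"
  proof
    assume "\<exists>n::int. 2 * pi * real j / 5 = of_int (2*n) * pi"
    then obtain n :: int where "2 * pi * real j / 5 = of_int (2*n) * pi" by blast
    then have "real j = 5 * of_int n" using pi_gt_zero by (simp add: field_simps)
    then have "int j = 5 * n" by linarith
    then show "\<exists>n::int. int j = 5 * n" by blast
  next
    assume "\<exists>n::int. int j = 5 * n"
    then obtain n :: int where "int j = 5 * n" by blast
    then have "real j = 5 * of_int n" by linarith
    then show "\<exists>n::int. 2 * pi * real j / 5 = of_int (2*n) * pi" by (intro exI[of _ n]) simp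
  qed
  also have "\<dots> \<longleftrightarrow> 5 dvd j" by presburger
  finally show ?thesis using e by simp
qed

lemma geo5: "(\<Sum>k<5::nat. (exp (2 * of_real pi * \<i> / 5) ^ (2*n)) ^ k) = (if 5 dvd n then 5 else 0)"
proof -
  define w where "w = exp (2 * of_real pi * \<i> / 5) ^ (2*n)"
  have w5: "w ^ 5 = 1" unfolding w_def power_mult[symmetric]
    by (subst alpha_pow_eq_1) simp
  have "w = 1 \<longleftrightarrow> 5 dvd n" unfolding w_def alpha_pow_eq_1 by presburger
  then show ?thesis unfolding w_def[symmetric] sum_gp_strict using w5 by auto
qed

theorem theorem5:
  fixes as bs :: "(complex \<times> real) list" and c x :: complex
  defines "\<alpha> \<equiv> exp (2 * of_real pi * \<i> / 5)"
  assumes nzA: "\<forall>(a, A) \<in> set as. A \<noteq> 0"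
    and nzB: "\<forall>(b, B) \<in> set bs. B \<noteq> 0"
    and okA: "\<forall>p \<in> set as. poch_ok p"
    and okB: "\<forall>p \<in> set bs. poch_ok p"
    and convL: "\<forall>k<5::nat. summable (fw_term as bs (c * (x * \<alpha> ^ k)\<^sup>2))"
    and convR: "summable (fw_term (map (\<lambda>(a, A). (a, 5 * A)) as)
                  ([(1/5, 1), (2/5, 1), (3/5, 1), (4/5, 1)] @ map (\<lambda>(b, B). (b, 5 * B)) bs)
                  ((c * x\<^sup>2 / 5) ^ 5))"
  shows "(\<Sum>k<5::nat. fox_wright_star as bs (c * (x * \<alpha> ^ k)\<^sup>2)) =
         5 * fox_wright_star (map (\<lambda>(a, A). (a, 5 * A)) as)
               ([(1/5, 1), (2/5, 1), (3/5, 1), (4/5, 1)] @ map (\<lambda>(b, B). (b, 5 * B)) bs)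
               ((c * x\<^sup>2 / 5) ^ 5)"
proof -
  define as' where "as' = map (\<lambda>(a, A). (a, 5 * A)) as"
  define bs' where "bs' = ([(1/5, 1), (2/5, 1), (3/5, 1), (4/5, 1)] @ map (\<lambda>(b, B). (b, 5 * B)) bs :: (complex \<times> real) list)"
  define R where "R = fox_wright_star as' bs' ((c * x\<^sup>2 / 5) ^ 5)"
  define h where "h n = fw_coeff as bs n * (c * x\<^sup>2) ^ n / fact n * (if 5 dvd n then 5 else 0)" for n
  have L: "(\<Sum>k<5::nat. fox_wright_star as bs (c * (x * \<alpha> ^ k)\<^sup>2))
      = (\<Sum>n. \<Sum>k<5::nat. fw_term as bs (c * (x * \<alpha> ^ k)\<^sup>2) n)"
    unfolding fox_wright_star_def using convL by (subst suminf_sum) auto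
  have hk: "(\<Sum>k<5::nat. fw_term as bs (c * (x * \<alpha> ^ k)\<^sup>2) n) = h n" for n
  proof -
    have "(c * (x * \<alpha> ^ k)\<^sup>2) ^ n = (c * x\<^sup>2) ^ n * (\<alpha> ^ (2*n)) ^ k" for k
      by (simp add: power_mult_distrib power_mult[symmetric] mult.commute mult.left_commute)
    then have "(\<Sum>k<5::nat. fw_term as bs (c * (x * \<alpha> ^ k)\<^sup>2) n)
       = fw_coeff as bs n * (c * x\<^sup>2) ^ n / fact n * (\<Sum>k<5::nat. (\<alpha> ^ (2*n)) ^ k)"
      unfolding fw_term_def by (simp add: sum_distrib_left sum_divide_distrib mult.assoc)
    then show ?thesis unfolding h_def \<alpha>_def geo5 .
  qed
  have hs: "(\<lambda>m. h (5*m)) sums (5 * R)"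
  proof -
    have "h (5*m) = 5 * fw_term as' bs' ((c * x\<^sup>2 / 5) ^ 5) m" for m
    proof -
      have "h (5*m) = 5 * (fw_coeff as bs (5*m) * (c * x\<^sup>2) ^ (5*m) / fact (5*m))"
        unfolding h_def by simp
      also have "\<dots> = 5 * fw_term as' bs' ((c * x\<^sup>2 / 5) ^ 5) m"
      proof -
        have pw: "(c * x\<^sup>2) ^ (5*m) = ((c * x\<^sup>2 / 5) ^ 5) ^ m * 5^(5*m)"
        proof -
          have "((c * x\<^sup>2 / 5) ^ 5) ^ m = (c * x\<^sup>2) ^ (5*m) / 5^(5*m)"
            by (simp only: power_mult[symmetric] power_divide)
          then show ?thesis by simp
        qed
        show ?thesis
          unfolding fw_term_def as'_def bs'_def fw_coeff_5 fact5 pw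
          by (simp add: field_simps)
      qed
      finally show ?thesis .
    qed
    moreover have "(\<lambda>m. 5 * fw_term as' bs' ((c * x\<^sup>2 / 5) ^ 5) m) sums (5 * R)"
      unfolding R_def fox_wright_star_def
      using convR unfolding as'_def bs'_def by (intro sums_mult summable_sums)
    ultimately show ?thesis by simp
  qed
  have "h sums (5 * R)"
  proof (subst sums_mono_reindex[symmetric, of "\<lambda>m. 5*m"])
    show "strict_mono (\<lambda>m::nat. 5*m)" by (auto simp: strict_mono_def)
    show "h n = 0" if "n \<notin> range (\<lambda>m::nat. 5*m)" for n
      using that unfolding h_def by (auto elim!: dvdE)
    show "(\<lambda>n. h (5 * n)) sums (5 * R)" by (rule hs)
  qed
  then show ?thesis unfolding L hk R_def as'_def bs'_def by (simp add: sums_iff)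
qed

end
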